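(* Let $X,Y,I\subseteq\mathbb{R}^n$. Then $(X\cup Y)+I=(X+I)\cup(Y+I)$. If moreover $X$ and $Y$ are closed with $X\cup Y$ $\ell_1$-convex, and $I$ is an interval, then also $(X\cap Y)+I=(X+I)\cap(Y+I)$.
   Context: $+$ denotes Minkowski sum. A subset $Z\subseteq\mathbb{R}^n$ is $\ell_1$-convex if for all $z,z'\in Z$, with $D=\sum_i|z_i-z'_i|$, there is $\gamma\colon[0,D]\to Z$ with $\gamma(0)=z,\gamma(D)=z'$ and $\sum_i|\gamma_i(t)-\gamma_i(t')|=|t-t'|$ for all $t,t'$. An interval in $\mathbb{R}^n$ is a set $\prod_{i=1}^n I_i$ with each $I_i\subseteq\mathbb{R}$ a (possibly empty, possibly unbounded) interval. *)

theory Defs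
  imports "HOL-Analysis.Analysis" "HOL-Library.Set_Algebras"
begin

text \<open>Minkowski sum is the library's set_plus, written A + B (HOL-Library.Set_Algebras).
  R^n is modelled as real ^ 'n.\<close>

definition l1_dist :: "real ^ 'n \<Rightarrow> real ^ 'n \<Rightarrow> real" where
  "l1_dist x y = (\<Sum>i\<in>UNIV. \<bar>x $ i - y $ i\<bar>)"

definition l1_convex :: "(real ^ 'n) set \<Rightarrow> bool" where
  "l1_convex Z \<longleftrightarrow>
     (\<forall>z\<in>Z. \<forall>z'\<in>Z. \<exists>\<gamma> :: real \<Rightarrow> real ^ 'n.
        \<gamma> 0 = z \<and> \<gamma> (l1_dist z z') = z' \<and>
        (\<forall>t\<in>{0..l1_dist z z'}. \<gamma> t \<in> Z) \<and>
        (\<forall>t\<in>{0..l1_dist z z'}. \<forall>t'\<in>{0..l1_dist z z'}.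
            l1_dist (\<gamma> t) (\<gamma> t') = \<bar>t - t'\<bar>))"

text \<open>A real interval (possibly empty, possibly unbounded) is a set S of reals with
  the property is_interval S; an interval in R^n is a product of such.\<close>
definition box_interval :: "(real ^ 'n) set \<Rightarrow> bool" where
  "box_interval S \<longleftrightarrow>
     (\<exists>J :: 'n \<Rightarrow> real set. (\<forall>i. is_interval (J i)) \<and> S = {x. \<forall>i. x $ i \<in> J i})"

end

theory Submission
  imports Defs
begin

lemma between_coord:
  fixes x y g :: "real ^ 'n"
  assumes "l1_dist x g + l1_dist g y = l1_dist x y"
  shows "\<bar>x $ i - g $ i\<bar> + \<bar>g $ i - y $ i\<bar> = \<bar>x $ i - y $ i\<bar>"
proof -
  let ?f = "\<lambda>i. \<bar>x $ i - g $ i\<bar> + \<bar>g $ i - y $ i\<bar> - \<bar>x $ i - y $ i\<bar>"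
  have nn: "\<And>j. ?f j \<ge> 0" by simp
  have "sum ?f UNIV = 0" using assms
    by (simp add: l1_dist_def sum_subtractf sum.distrib)
  hence "\<forall>j\<in>UNIV. ?f j = 0" using nn by (subst sum_nonneg_eq_0_iff[symmetric]) auto
  thus ?thesis by simp
qed

lemma part2:
  fixes X Y I :: "(real ^ 'n) set"
  assumes cX: "closed X" and cY: "closed Y" and cv: "l1_convex (X \<union> Y)"
    and bI: "box_interval I"
  shows "(X \<inter> Y) + I = (X + I) \<inter> (Y + I)"
proof
  show "(X \<inter> Y) + I \<subseteq> (X + I) \<inter> (Y + I)"
    by (auto elim!: set_plus_elim)
next
  show "(X + I) \<inter> (Y + I) \<subseteq> (X \<inter> Y) + I"
  proof
    fix p assume "p \<in> (X + I) \<inter> (Y + I)"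
    then obtain x a y b where p1: "p = x + a" and x: "x \<in> X" and a: "a \<in> I"
      and p2: "p = y + b" and y: "y \<in> Y" and b: "b \<in> I"
      by (metis IntD1 IntD2 set_plus_elim)
    obtain J where J: "\<And>i. is_interval (J i)" and IJ: "I = {x. \<forall>i. x $ i \<in> J i}"
      using bI unfolding box_interval_def by blast
    define D where "D = l1_dist x y"
    obtain \<gamma> where g0: "\<gamma> 0 = x" and gD: "\<gamma> D = y"
      and gin: "\<forall>t\<in>{0..D}. \<gamma> t \<in> X \<union> Y"
      and giso: "\<forall>t\<in>{0..D}. \<forall>t'\<in>{0..D}. l1_dist (\<gamma> t) (\<gamma> t') = \<bar>t - t'\<bar>"
      using cv x y unfolding l1_convex_def D_def by blast
    have D0: "0 \<le> D" unfolding D_def l1_dist_def by (simp add: sum_nonneg)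
    have cont: "continuous_on {0..D} \<gamma>"
      unfolding continuous_on_iff
    proof (intro ballI allI impI)
      fix t e assume t: "t \<in> {0..D}" and e: "(0::real) < e"
      show "\<exists>d>0. \<forall>t'\<in>{0..D}. dist t' t < d \<longrightarrow> dist (\<gamma> t') (\<gamma> t) < e"
      proof (intro exI[of _ e] conjI ballI impI)
        fix t' assume t': "t' \<in> {0..D}" and "dist t' t < e"
        have "dist (\<gamma> t') (\<gamma> t) = norm (\<gamma> t' - \<gamma> t)" by (simp add: dist_norm)
        also have "\<dots> \<le> l1_dist (\<gamma> t') (\<gamma> t)"
          using norm_le_l1_cart[of "\<gamma> t' - \<gamma> t"] by (simp add: l1_dist_def)
        also have "\<dots> = \<bar>t' - t\<bar>" using giso t t' by blast
        finally show "dist (\<gamma> t') (\<gamma> t) < e" using \<open>dist t' t < e\<close> by (simp add: dist_real_def)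
      qed (use e in auto)
    qed
    have conn: "connected (\<gamma> ` {0..D})"
      using cont connected_continuous_image connected_Icc by blast
    have "\<gamma> ` {0..D} \<inter> X \<inter> Y \<noteq> {}"
    proof
      assume E: "\<gamma> ` {0..D} \<inter> X \<inter> Y = {}"
      have "\<gamma> ` {0..D} \<subseteq> X \<union> Y" using gin by blast
      moreover have "x \<in> \<gamma> ` {0..D}" using g0 D0 by force
      moreover have "y \<in> \<gamma> ` {0..D}" using gD D0 by force
      ultimately show False using conn cX cY E x y unfolding connected_closed by blast
    qed
    then obtain t where t: "t \<in> {0..D}" and gX: "\<gamma> t \<in> X" and gY: "\<gamma> t \<in> Y" by blast
    have "l1_dist x (\<gamma> t) + l1_dist (\<gamma> t) y = l1_dist x y"
    proof -
      have "l1_dist x (\<gamma> t) = \<bar>0 - t\<bar>" using giso t D0 g0 by force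
      moreover have "l1_dist (\<gamma> t) y = \<bar>t - D\<bar>" using giso t D0 gD by force
      ultimately show ?thesis using t by (simp add: D_def)
    qed
    note bc = between_coord[OF this]
    have "p - \<gamma> t \<in> I"
      unfolding IJ
    proof (intro CollectI allI)
      fix i
      have ai: "a $ i \<in> J i" and bi: "b $ i \<in> J i" using a b IJ by auto
      have e1: "p $ i = x $ i + a $ i" using p1 by simp
      have e2: "p $ i = y $ i + b $ i" using p2 by simp
      have ai': "a $ i = p $ i - x $ i" and bi': "b $ i = p $ i - y $ i" using e1 e2 by linarith+
      have btw: "min (a $ i) (b $ i) \<le> p $ i - \<gamma> t $ i \<and> p $ i - \<gamma> t $ i \<le> max (a $ i) (b $ i)"
        using bc[of i] unfolding ai' bi' by (auto simp: abs_if split: if_splits)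
      have "min (a $ i) (b $ i) \<in> J i" "max (a $ i) (b $ i) \<in> J i" using ai bi
        by (auto simp: min_def max_def)
      hence "p $ i - \<gamma> t $ i \<in> J i" using J[of i] btw unfolding is_interval_1 by blast
      thus "(p - \<gamma> t) $ i \<in> J i" by simp
    qed
    hence "\<gamma> t + (p - \<gamma> t) \<in> (X \<inter> Y) + I" using gX gY by blast
    thus "p \<in> (X \<inter> Y) + I" by simp
  qed
qed

theorem proposition2p4:
  fixes X Y I :: "(real ^ 'n) set"
  shows "(X \<union> Y) + I = (X + I) \<union> (Y + I) \<and>
         (closed X \<and> closed Y \<and> l1_convex (X \<union> Y) \<and> box_interval I \<longrightarrow>
           (X \<inter> Y) + I = (X + I) \<inter> (Y + I))"
  using Un_set_plus part2 by blast

end
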